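(* Consider the Neutralization-Based Reclamation (NBR) scheme described in the context. Let $T_r$ be a reclaiming thread and $T_w$ another thread. If $T_w$ enters its write phase (i.e. performs the sequentially consistent store of false to its restartable flag, after having written its reservations) before it is signalled by $T_r$, then $T_r$, when it subsequently scans the reservation slots of $T_w$, is guaranteed to read all the reservations that $T_w$ made before entering its write phase.
   Context: Setting: an asynchronous shared-memory system with a fixed set of threads operating on a linked concurrent data structure whose nodes are reached from a fixed set of entry points. NBR (Neutralization-Based Reclamation) works as follows. Each thread has a private limbo bag of retired nodes, a thread-local atomic boolean flag restartable, and a row of a shared single-writer multi-reader array reservations (at most $r$ slots per thread). Each data structure operation consists of an optional preamble (no access to shared nodes), then one or more read phases each followed by a write phase. Immediately before a read phase the thread sets a checkpoint (via sigsetjmp); at the beginning of a read phase it clears its reservations and then stores true into restartable (sequentially consistent store); during a read phase it only reads, and only shared nodes discovered within that phase starting from an entry point. To end a read phase and enter the write phase, the thread writes pointers to all shared nodes it will access in the write phase into its reservation slots and then stores false into restartable (sequentially consistent store); in the write phase it accesses only reserved nodes. On receipt of a neutralizing signal a thread runs a handler: if restartable is false it returns and continues; otherwise it jumps back (siglongjmp) to its last checkpoint, discarding all private references obtained in the read phase. A thread retires an unlinked node by appending it to its limbo bag; when the limbo bag exceeds a predetermined size threshold, the thread (a reclaimer) first sends a neutralizing signal to every other thread, then scans the reservations of all threads, then frees every node in its limbo bag that is not reserved. Assumption: if a thread $T_i$ sends a signal to $T_j$, then by the time $T_i$ finishes sending it, $T_j$ has received it and will execute the signal handler before taking any further step of its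 program. *)

theory Defs
  imports Main
begin

text \<open>Memory follows x86-TSO:
  ordinary stores go into a per-thread FIFO store buffer and are later
  flushed to main memory; a sequentially consistent store requires the
  issuing thread's store buffer to be drained and writes directly to memory;
  a load returns the newest value for the location in the thread's own
  store buffer, or else the value in main memory.\<close>

datatype 't loc =
    Restartable 't
  | Resv 't nat
  | Node nat              \<comment> \<open>fields of shared data structure nodes\<close>

datatype vval = VBool bool | VPtr nat | VNull

record 't state =
  mem :: "'t loc \<Rightarrow> vval"
  buf :: "'t \<Rightarrow> ('t loc \<times> vval) list"

datatype 't act =
    Write 't "'t loc" vval
  | SCStore 't "'t loc" vval
  | Read 't "'t loc" vval
  | Flush 't
  | Signal 't 't                     \<comment> \<open>Signal a b: a sends a neutralizing signal to b\<close>
  | Local 't                         \<comment> \<open>any other step (control flow, handler, jumps)\<close>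

definition load_val :: "'t state \<Rightarrow> 't \<Rightarrow> 't loc \<Rightarrow> vval" where
  "load_val s t l = (case map_of (rev (buf s t)) l of Some v \<Rightarrow> v | None \<Rightarrow> mem s l)"

fun step :: "'t state \<Rightarrow> 't act \<Rightarrow> 't state \<Rightarrow> bool" where
  "step s (Write t l v) s' = (s' = s\<lparr>buf := (buf s)(t := buf s t @ [(l, v)])\<rparr>)"
| "step s (SCStore t l v) s' = (buf s t = [] \<and> s' = s\<lparr>mem := (mem s)(l := v)\<rparr>)"
| "step s (Read t l v) s' = (v = load_val s t l \<and> s' = s)"
| "step s (Flush t) s' = (\<exists>l v rest. buf s t = (l, v) # rest \<and>
       s' = s\<lparr>mem := (mem s)(l := v), buf := (buf s)(t := rest)\<rparr>)"
| "step s (Signal a b) s' = (s' = s)"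
| "step s (Local t) s' = (s' = s)"

text \<open>An execution: a run of states and actions starting with empty store buffers
  (initial memory arbitrary).  Positions in the run are real-time order.\<close>
definition execution :: "(nat \<Rightarrow> 't state) \<Rightarrow> (nat \<Rightarrow> 't act) \<Rightarrow> bool" where
  "execution S A \<longleftrightarrow> (\<forall>t. buf (S 0) t = []) \<and> (\<forall>n. step (S n) (A n) (S (Suc n)))"

fun stores_to :: "'t act \<Rightarrow> 't loc \<Rightarrow> bool" where
  "stores_to (Write t l v) l' = (l = l')"
| "stores_to (SCStore t l v) l' = (l = l')"
| "stores_to _ _ = False"

fun actor :: "'t act \<Rightarrow> 't" where
  "actor (Write t l v) = t" | "actor (SCStore t l v) = t" | "actor (Read t l v) = t"
| "actor (Flush t) = t" | "actor (Signal a b) = a" | "actor (Local t) = t"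

definition single_writer_reservations :: "(nat \<Rightarrow> 't act) \<Rightarrow> bool" where
  "single_writer_reservations A \<longleftrightarrow>
     (\<forall>n t k. stores_to (A n) (Resv t k) \<longrightarrow> actor (A n) = t)"

end

theory Submission
  imports Defs
begin

lemma P_inv:
  assumes exec: "execution S A" and swmr: "single_writer_reservations A"
  shows "\<forall>t l v. (l, v) \<in> set (buf (S n) t) \<longrightarrow> l = Resv t' k \<longrightarrow> t = t'"
proof (induction n)
  case 0 then show ?case using exec by (simp add: execution_def)
next
  case (Suc n)
  have st: "step (S n) (A n) (S (Suc n))" using exec by (simp add: execution_def)
  show ?case
  proof (cases "A n")
    case (Write t l v)
    then have "l = Resv t' k \<longrightarrow> t = t'" using swmr unfolding single_writer_reservations_def
      by (metis actor.simps(1) stores_to.simps(1))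
    then show ?thesis using Suc st Write by auto
  next
    case (Flush t)
    then obtain l w rest where b: "buf (S n) t = (l, w) # rest"
        and s': "S (Suc n) = (S n)\<lparr>mem := (mem (S n))(l := w), buf := (buf (S n))(t := rest)\<rparr>"
      using st by auto
    show ?thesis
    proof (intro allI impI)
      fix t2 l2 v2 assume a: "(l2, v2) \<in> set (buf (S (Suc n)) t2)" "l2 = Resv t' k"
      then have "(l2, v2) \<in> set (buf (S n) t2)" using s' b by (auto split: if_splits)
      then show "t2 = t'" using Suc a by blast
    qed
  qed (use Suc st in auto)
qed

definition case1 :: "'t state \<Rightarrow> 't \<Rightarrow> 't loc \<Rightarrow> vval \<Rightarrow> bool" where
  "case1 s tw L p \<longleftrightarrow> mem s L = p \<and> (\<forall>x \<in> set (buf s tw). fst x \<noteq> L)"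

definition case2 :: "'t state \<Rightarrow> 't \<Rightarrow> 't loc \<Rightarrow> vval \<Rightarrow> bool" where
  "case2 s tw L p \<longleftrightarrow> (\<exists>pre post. buf s tw = pre @ [(L, p)] @ post \<and> (\<forall>x \<in> set post. fst x \<noteq> L))"

theorem lemma5:
  fixes S :: "nat \<Rightarrow> 't state" and A :: "nat \<Rightarrow> 't act"
    and Tr Tw :: 't and r k i j s c :: nat and p v :: vval
  assumes exec: "execution S A"
    and swmr: "single_writer_reservations A"
    and distinct: "Tr \<noteq> Tw"
    and slot: "k < r"
    \<comment> \<open>T_w reserves p in slot k ...\<close>
    and reserve: "A i = Write Tw (Resv Tw k) p"
    \<comment> \<open>... then enters its write phase by the SC store of false to restartable ...\<close>
    and enter_write: "i < j" "A j = SCStore Tw (Restartable Tw) (VBool False)"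
    \<comment> \<open>... before T_r signals T_w ...\<close>
    and signal: "j < s" "A s = Signal Tr Tw"
    \<comment> \<open>... and T_r subsequently scans slot k of T_w, reading v.\<close>
    and scan: "s < c" "A c = Read Tr (Resv Tw k) v"
    \<comment> \<open>p is the reservation made in slot k before entering the write phase
        (no later store to that slot has happened up to the scan)\<close>
    and last_res: "\<forall>n. i < n \<and> n < c \<longrightarrow> \<not> stores_to (A n) (Resv Tw k)"
  shows "v = p"
proof -
  define L where "L = Resv Tw k"
  have st: "\<And>n. step (S n) (A n) (S (Suc n))" using exec by (simp add: execution_def)
  have P: "\<And>n t l v. (l, v) \<in> set (buf (S n) t) \<Longrightarrow> l = L \<Longrightarrow> t = Tw"
    using P_inv[OF exec swmr] unfolding L_def by blast
  have pres1: "case1 (S (Suc n)) Tw L p" if "case1 (S n) Tw L p" "i < n" "n < c" for n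
  proof -
    have ns: "\<not> stores_to (A n) L" using last_res that unfolding L_def by blast
    show ?thesis
    proof (cases "A n")
      case (Write t l v)
      then show ?thesis using st[of n] that ns by (auto simp: case1_def)
    next
      case (SCStore t l v)
      then show ?thesis using st[of n] that ns by (auto simp: case1_def)
    next
      case (Flush t)
      then obtain l w rest where b: "buf (S n) t = (l, w) # rest"
        and s': "S (Suc n) = (S n)\<lparr>mem := (mem (S n))(l := w), buf := (buf (S n))(t := rest)\<rparr>"
        using st[of n] by auto
      have "l \<noteq> L"
      proof
        assume "l = L"
        then have "t = Tw" using P[of l w n t] b by auto
        then show False using that(1) b \<open>l = L\<close> by (auto simp: case1_def)
      qed
      then show ?thesis using that(1) s' b by (auto simp: case1_def)
    qed (use st[of n] that in auto)
  qed
  have pres12: "case1 (S (Suc n)) Tw L p \<or> case2 (S (Suc n)) Tw L p"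
    if h12: "case1 (S n) Tw L p \<or> case2 (S n) Tw L p" "i < n" "n < c" for n
  proof (cases "case1 (S n) Tw L p")
    case True then show ?thesis using pres1 that by blast
  next
    case False
    then obtain pre post where b: "buf (S n) Tw = pre @ [(L, p)] @ post"
      and po: "\<forall>x \<in> set post. fst x \<noteq> L" using h12(1) False unfolding case2_def by blast
    have ns: "\<not> stores_to (A n) L" using last_res h12 unfolding L_def by blast
    show ?thesis
    proof (cases "A n")
      case (Write t l w)
      show ?thesis
      proof (cases "t = Tw")
        case True
        then have "buf (S (Suc n)) Tw = pre @ [(L, p)] @ (post @ [(l, w)])" "l \<noteq> L"
          using st[of n] Write b ns by auto
        then show ?thesis using po unfolding case2_def by (metis Un_iff fst_conv set_append empty_iff empty_set set_ConsD)
      next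
        case False
        then show ?thesis using st[of n] Write b po unfolding case2_def by auto
      qed
    next
      case (SCStore t l w)
      then show ?thesis using st[of n] b po unfolding case2_def by auto
    next
      case (Flush t)
      then obtain l w rest where b2: "buf (S n) t = (l, w) # rest"
        and s': "S (Suc n) = (S n)\<lparr>mem := (mem (S n))(l := w), buf := (buf (S n))(t := rest)\<rparr>"
        using st[of n] by auto
      show ?thesis
      proof (cases "t = Tw")
        case False
        then show ?thesis using s' b po unfolding case2_def by auto
      next
        case True
        show ?thesis
        proof (cases pre)
          case Nil
          then have "l = L" "w = p" "rest = post" using b b2 True by auto
          then show ?thesis using s' True po unfolding case1_def by auto
        next
          case (Cons x pre')
          then have "rest = pre' @ [(L, p)] @ post" using b b2 True by auto
          then show ?thesis using s' True po unfolding case2_def by auto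
        qed
      qed
    qed (use st[of n] b po in \<open>auto simp: case2_def\<close>)
  qed
  have init: "case2 (S (Suc i)) Tw L p"
    using st[of i] reserve unfolding case2_def L_def by force
  have I: "case1 (S (Suc i + m)) Tw L p \<or> case2 (S (Suc i + m)) Tw L p" if "Suc i + m \<le> c" for m
    using that
  proof (induction m)
    case 0 then show ?case using init by simp
  next
    case (Suc m)
    then show ?case using pres12[of "Suc i + m"] by simp
  qed
  have Ij: "case1 (S j) Tw L p \<or> case2 (S j) Tw L p"
    using I[of "j - Suc i"] enter_write signal scan by simp
  have "buf (S j) Tw = []" using st[of j] enter_write by simp
  then have c1j: "case1 (S j) Tw L p" using Ij unfolding case2_def by auto
  have J: "case1 (S (j + m)) Tw L p" if "j + m \<le> c" for m
    using that
  proof (induction m)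
    case 0 then show ?case using c1j by simp
  next
    case (Suc m)
    then show ?case using pres1[of "j + m"] enter_write by simp
  qed
  have c1c: "case1 (S c) Tw L p" using J[of "c - j"] signal scan by simp
  have nb: "map_of (rev (buf (S c) Tr)) L = None"
  proof (rule ccontr)
    assume "map_of (rev (buf (S c) Tr)) L \<noteq> None"
    then obtain w where "map_of (rev (buf (S c) Tr)) L = Some w" by auto
    then have "(L, w) \<in> set (buf (S c) Tr)" by (metis map_of_SomeD set_rev)
    then show False using P distinct by blast
  qed
  have "v = load_val (S c) Tr L" using st[of c] scan unfolding L_def by simp
  then show ?thesis using nb c1c unfolding load_val_def case1_def by simp
qed

end
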